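(* Let $X$ be a set, $F:\mathcal{P}(X)\to\mathcal{P}(X)$ an interior operator, and $\kappa$ a cardinal. Suppose that $(\mathbf{Fix}(F),\subseteq,\bigcup)$ has no basis indexed by a set of cardinality $\kappa$. Then there is no set $Y$ of cardinality less than $\kappa$ together with a relation $r\subseteq X\times Y$ such that $F=\langle r\rangle\circ[r^{\sim}]$.
   Context: An interior operator on $\mathcal{P}(X)$ is a map $F$ that is monotonic, contractive ($F(U)\subseteq U$), and satisfies $F(U)\subseteq F(F(U))$; $\mathbf{Fix}(F)=\{U\subseteq X\mid F(U)=U\}$, a complete sup-lattice under inclusion and unions. A basis of a complete sup-lattice $(L,\leq,\bigvee)$ is a family $(x_i)_{i\in I}$ of elements of $L$ (repetitions allowed) such that for every $y\in L$, $y=\bigvee\{x_i\mid x_i\leq y\}$; it is indexed by $I$. For $r\subseteq X\times Y$, $r^{\sim}=\{(y,x)\mid (x,y)\in r\}$. For $t\subseteq A\times B$, $\langle t\rangle,[t]:\mathcal{P}(B)\to\mathcal{P}(A)$ are $\langle t\rangle(V)=\{a\mid \exists b,\ (a,b)\in t\wedge b\in V\}$ and $[t](V)=\{a\mid \forall b,\ (a,b)\in t\Rightarrow b\in V\}$. *)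

theory Defs
  imports Main "HOL-Library.Equipollence"
begin

definition interior_operator :: "'a set \<Rightarrow> ('a set \<Rightarrow> 'a set) \<Rightarrow> bool" where
  "interior_operator X F \<longleftrightarrow>
     (\<forall>U. U \<subseteq> X \<longrightarrow> F U \<subseteq> X) \<and>
     (\<forall>U V. U \<subseteq> V \<and> V \<subseteq> X \<longrightarrow> F U \<subseteq> F V) \<and>
     (\<forall>U. U \<subseteq> X \<longrightarrow> F U \<subseteq> U) \<and>
     (\<forall>U. U \<subseteq> X \<longrightarrow> F U \<subseteq> F (F U))"

definition Fix :: "'a set \<Rightarrow> ('a set \<Rightarrow> 'a set) \<Rightarrow> 'a set set" where
  "Fix X F = {U. U \<subseteq> X \<and> F U = U}"

definition is_basis :: "'a set set \<Rightarrow> 'i set \<Rightarrow> ('i \<Rightarrow> 'a set) \<Rightarrow> bool" where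
  "is_basis L I b \<longleftrightarrow> (\<forall>i\<in>I. b i \<in> L) \<and>
     (\<forall>y\<in>L. y = \<Union>{b i | i. i \<in> I \<and> b i \<subseteq> y})"

definition diam :: "('a \<times> 'b) set \<Rightarrow> 'b set \<Rightarrow> 'a set" where
  "diam t V = {a. \<exists>b. (a, b) \<in> t \<and> b \<in> V}"

definition box :: "'a set \<Rightarrow> ('a \<times> 'b) set \<Rightarrow> 'b set \<Rightarrow> 'a set" where
  "box A t V = {a \<in> A. \<forall>b. (a, b) \<in> t \<longrightarrow> b \<in> V}"

end

theory Submission
  imports Defs
begin

theorem lemma6:
  fixes X :: "'a set" and F :: "'a set \<Rightarrow> 'a set" and K :: "'k set"
  assumes "interior_operator X F"
    and "\<not> (\<exists>(I :: 'k set) (b :: 'k \<Rightarrow> 'a set). I \<approx> K \<and> is_basis (Fix X F) I b)"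
  shows "\<not> (\<exists>(Y :: 'y set) (r :: ('a \<times> 'y) set).
            Y \<prec> K \<and> r \<subseteq> X \<times> Y \<and>
            (\<forall>U. U \<subseteq> X \<longrightarrow> F U = diam r (box Y (converse r) U)))"
proof
  assume "\<exists>(Y :: 'y set) (r :: ('a \<times> 'y) set).
            Y \<prec> K \<and> r \<subseteq> X \<times> Y \<and>
            (\<forall>U. U \<subseteq> X \<longrightarrow> F U = diam r (box Y (converse r) U))"
  then obtain Y :: "'y set" and r where Y: "Y \<prec> K" and r: "r \<subseteq> X \<times> Y"
    and FF: "\<And>U. U \<subseteq> X \<Longrightarrow> F U = diam r (box Y (converse r) U)" by blast
  from Y obtain g where g: "inj_on g Y" "g ` Y \<subseteq> K"
    unfolding lesspoll_def lepoll_def by blast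
  define C where "C y = {a. (a, y) \<in> r}" for y
  have Fe: "\<And>U. U \<subseteq> X \<Longrightarrow> F U = \<Union>{C y | y. y \<in> Y \<and> C y \<subseteq> U}"
    using r unfolding FF diam_def box_def C_def by (auto 4 4)
  have CF: "C y \<in> Fix X F" for y
  proof -
    have sub: "C y \<subseteq> X" using r unfolding C_def by auto
    have "C y \<subseteq> F (C y)"
    proof
      fix x assume x: "x \<in> C y"
      hence "y \<in> Y" using r unfolding C_def by auto
      thus "x \<in> F (C y)" using x Fe[OF sub] by blast
    qed
    moreover have "F (C y) \<subseteq> C y" using Fe[OF sub] by blast
    ultimately show ?thesis unfolding Fix_def using sub by auto
  qed
  have eF: "{} \<in> Fix X F" using Fe[of "{}"] unfolding Fix_def by auto
  define b where "b k = (if k \<in> g ` Y then C (inv_into Y g k) else {})" for k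
  have "is_basis (Fix X F) K b"
    unfolding is_basis_def
  proof (intro conjI ballI)
    fix k assume "k \<in> K" show "b k \<in> Fix X F" using CF eF by (simp add: b_def)
  next
    fix V assume V: "V \<in> Fix X F"
    hence VX: "V \<subseteq> X" and VF: "F V = V" by (auto simp: Fix_def)
    have "V = \<Union>{C y | y. y \<in> Y \<and> C y \<subseteq> V}" using Fe[OF VX] VF by simp
    also have "\<dots> = \<Union>{b i | i. i \<in> K \<and> b i \<subseteq> V}"
    proof (rule antisym)
      show "\<Union>{C y | y. y \<in> Y \<and> C y \<subseteq> V} \<subseteq> \<Union>{b i | i. i \<in> K \<and> b i \<subseteq> V}"
      proof
        fix x assume "x \<in> \<Union>{C y | y. y \<in> Y \<and> C y \<subseteq> V}"
        then obtain y where y: "y \<in> Y" "C y \<subseteq> V" "x \<in> C y" by blast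
        have "b (g y) = C y" using y g by (simp add: b_def)
        thus "x \<in> \<Union>{b i | i. i \<in> K \<and> b i \<subseteq> V}" using y g by blast
      qed
    next
      show "\<Union>{b i | i. i \<in> K \<and> b i \<subseteq> V} \<subseteq> \<Union>{C y | y. y \<in> Y \<and> C y \<subseteq> V}"
      proof
        fix x assume "x \<in> \<Union>{b i | i. i \<in> K \<and> b i \<subseteq> V}"
        then obtain i where i: "i \<in> K" "b i \<subseteq> V" "x \<in> b i" by blast
        then have "i \<in> g ` Y" by (auto simp: b_def split: if_splits)
        then obtain y where "y \<in> Y" "i = g y" by blast
        with i g have "b i = C y" "y \<in> Y" by (auto simp: b_def)
        thus "x \<in> \<Union>{C y | y. y \<in> Y \<and> C y \<subseteq> V}" using i by blast
      qed
    qed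
    finally show "V = \<Union>{b i | i. i \<in> K \<and> b i \<subseteq> V}" .
  qed
  moreover have "K \<approx> K" by (rule eqpoll_refl)
  ultimately show False using assms(2) by blast
qed

end
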